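(* Let $n\ge 2$ and $I=\{0,1,\ldots,n-1\}$. Let $\tilde S_n$ be the affine permutation group with generators $\tilde s_0,\ldots,\tilde s_{n-1}$, and for $i\in I$ let $K_{\{i\}}=\langle\tilde s_j: j\in I,\ j\ne i\rangle$. Then: (1) for every $J\subseteq I$ with $|J|>1$, $(\tilde S_n,(K_{\{i\}})_{i\in J})$ is a subgroup geometry system; (2) for each $i\in I$, $K_{\{i\}}$ is isomorphic to the symmetric group $S_n$ on $\mathbb{Z}/n\mathbb{Z}$, via the map on generators $\tilde s_j\mapsto (j\ \ j+1 \bmod n)$ (the transposition of the residues $j$ and $j+1 \bmod n$); (3) for all $J,L\subseteq I$, $\langle\tilde s_i:i\in J\rangle\cap\langle\tilde s_i:i\in L\rangle=\langle\tilde s_i:i\in J\cap L\rangle$.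
   Context: $\tilde S_n$ is the group (under composition) of all bijections $u:\mathbb{Z}\to\mathbb{Z}$ with $u(j+n)=u(j)+n$ for all $j\in\mathbb{Z}$ and $\sum_{i=1}^n u(i)=\binom{n+1}{2}$; such $u$ is written $[u(1),\ldots,u(n)]$. The generators are $\tilde s_i=[1,\ldots,i-1,i+1,i,i+2,\ldots,n]$ for $1\le i\le n-1$ and $\tilde s_0=[0,2,\ldots,n-1,n+1]$. For a group $G$, a finite index set $J$ and subgroups $(K_{\{i\}})_{i\in J}$, put $K_\tau=\bigcap_{i\in\tau}K_{\{i\}}$ for $\emptyset\ne\tau\subseteq J$ and $K_\emptyset=G$. $(G,(K_{\{i\}})_{i\in J})$ is a subgroup geometry system if: (A1) for all $\tau,\tau'\subseteq J$, $K_{\tau\cap\tau'}=\langle K_\tau,K_{\tau'}\rangle$; (A2) for every $\tau\subsetneq J$ and $i\in J\setminus\tau$, $K_\tau K_{\{i\}}=\bigcap_{j\in\tau}K_{\{j\}}K_{\{i\}}$; (A3) for every $i\in J$, $K_J\ne K_{J\setminus\{i\}}$. *)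

theory Defs
  imports "HOL-Algebra.Generated_Groups" "HOL-Algebra.Bij" "HOL-Combinatorics.Transposition"
begin

definition affine_perm :: "nat \<Rightarrow> (int \<Rightarrow> int) \<Rightarrow> bool" where
  "affine_perm n u \<longleftrightarrow> bij u \<and> (\<forall>j. u (j + int n) = u j + int n)
     \<and> (\<Sum>i\<in>{1..int n}. u i) = int ((n + 1) choose 2)"

definition affS :: "nat \<Rightarrow> (int \<Rightarrow> int) monoid" where
  "affS n = \<lparr>carrier = {u. affine_perm n u}, mult = (\<lambda>u v. u \<circ> v), one = id\<rparr>"

text \<open>The affine permutation with window [w(1),...,w(n)], extended by u(j+n) = u(j)+n.\<close>
definition from_window :: "nat \<Rightarrow> (int \<Rightarrow> int) \<Rightarrow> int \<Rightarrow> int" where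
  "from_window n w j = w ((j - 1) mod int n + 1) + int n * ((j - 1) div int n)"

definition gen_s :: "nat \<Rightarrow> nat \<Rightarrow> int \<Rightarrow> int" where
  "gen_s n i = (if i = 0 then
       from_window n (\<lambda>p. if p = 1 then 0 else if p = int n then int n + 1 else p)
     else
       from_window n (\<lambda>p. if p = int i then int i + 1 else if p = int i + 1 then int i else p))"

definition Kmax :: "nat \<Rightarrow> nat \<Rightarrow> (int \<Rightarrow> int) set" where
  "Kmax n i = generate (affS n) (gen_s n ` ({0..<n} - {i}))"

definition Ktau :: "('a, 'b) monoid_scheme \<Rightarrow> ('i \<Rightarrow> 'a set) \<Rightarrow> 'i set \<Rightarrow> 'a set" where
  "Ktau G K \<tau> = (if \<tau> = {} then carrier G else (\<Inter>i\<in>\<tau>. K i))"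

definition subgroup_geometry_system ::
    "('a, 'b) monoid_scheme \<Rightarrow> 'i set \<Rightarrow> ('i \<Rightarrow> 'a set) \<Rightarrow> bool" where
  "subgroup_geometry_system G J K \<longleftrightarrow>
     group G \<and> finite J \<and> (\<forall>i\<in>J. subgroup (K i) G) \<and>
     (\<forall>\<tau> \<tau>'. \<tau> \<subseteq> J \<longrightarrow> \<tau>' \<subseteq> J \<longrightarrow>
        Ktau G K (\<tau> \<inter> \<tau>') = generate G (Ktau G K \<tau> \<union> Ktau G K \<tau>')) \<and>
     (\<forall>\<tau>. \<tau> \<subset> J \<longrightarrow> (\<forall>i\<in>J - \<tau>.
        Ktau G K \<tau> <#>\<^bsub>G\<^esub> K i =
          (if \<tau> = {} then carrier G else (\<Inter>j\<in>\<tau>. K j <#>\<^bsub>G\<^esub> K i)))) \<and>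
     (\<forall>i\<in>J. Ktau G K J \<noteq> Ktau G K (J - {i}))"

end

theory Submission
  imports Defs
begin

definition per :: "nat \<Rightarrow> (int \<Rightarrow> int) \<Rightarrow> bool" where
  "per n u \<longleftrightarrow> (\<forall>x. u (x + int n) = u x + int n)"

definition Dsum :: "nat \<Rightarrow> (int \<Rightarrow> int) \<Rightarrow> int" where
  "Dsum n u = (\<Sum>x\<in>{1..int n}. u x - x)"

lemma gauss_int: "(\<Sum>x\<in>{1..int n}. x) = int ((n + 1) choose 2)"
proof (induction n)
  case 0 then show ?case by simp
next
  case (Suc n)
  have e: "{1..int (Suc n)} = insert (int n + 1) {1..int n}" by auto
  have c0: "(Suc (Suc n) choose (Suc 1)) = (Suc n choose 1) + (Suc n choose (Suc 1))"
    by (rule binomial_Suc_Suc)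
  have c: "((Suc n + 1) choose 2) = ((n + 1) choose 2) + (n+1)"
    using c0 by (simp add: numeral_2_eq_2)
  have "int ((Suc n + 1) choose 2) = int ((n + 1) choose 2) + int n + 1" using c by simp
  then show ?case unfolding e using Suc by simp
qed

lemma carrier_affS: "u \<in> carrier (affS n) \<longleftrightarrow> bij u \<and> per n u \<and> Dsum n u = 0"
proof -
  have "(\<Sum>x\<in>{1..int n}. u x - x) = (\<Sum>x\<in>{1..int n}. u x) - (\<Sum>x\<in>{1..int n}. x)"
    by (simp add: sum_subtractf)
  then show ?thesis
    unfolding affS_def affine_perm_def per_def Dsum_def using gauss_int[of n] by auto
qed

lemma per_mult:
  assumes "\<And>x. g (x + N) = g x + c"
  shows "g (x + m * N) = g x + m * (c::int)"
proof -
  have A: "g (x + int k * N) = g x + int k * c" for x k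
  proof (induction k arbitrary: x)
    case 0 then show ?case by simp
  next
    case (Suc k)
    have "g (x + int (Suc k) * N) = g ((x + int k * N) + N)" by (simp add: algebra_simps)
    also have "\<dots> = g (x + int k * N) + c" by (rule assms)
    also have "\<dots> = g x + int (Suc k) * c" using Suc by (simp add: algebra_simps)
    finally show ?case .
  qed
  show ?thesis
  proof (cases "m \<ge> 0")
    case True then show ?thesis using A[of x "nat m"] by simp
  next
    case False
    have "g ((x + m*N) + int (nat (-m)) * N) = g (x + m*N) + int (nat (-m)) * c" by (rule A)
    then show ?thesis using False by simp
  qed
qed

definition sg :: "nat \<Rightarrow> nat \<Rightarrow> int \<Rightarrow> int" where
  "sg n j x = (if x mod int n = int j then x + 1
     else if x mod int n = (int j + 1) mod int n then x - 1 else x)"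

definition Pc :: "nat \<Rightarrow> (int \<Rightarrow> int) \<Rightarrow> bool" where
  "Pc c u \<longleftrightarrow> (\<forall>k. (u k \<le> int c) = (k \<le> int c))"

definition Stab :: "nat \<Rightarrow> nat set \<Rightarrow> (int \<Rightarrow> int) set" where
  "Stab n J = {u \<in> carrier (affS n). \<forall>c\<in>{0..<n} - J. Pc c u}"

definition Msq :: "nat \<Rightarrow> (int \<Rightarrow> int) \<Rightarrow> int" where
  "Msq n u = (\<Sum>x\<in>{1..int n}. (u x - x)^2)"

definition phi :: "nat \<Rightarrow> (int \<Rightarrow> int) \<Rightarrow> nat \<Rightarrow> nat" where
  "phi n u = restrict (\<lambda>r. nat (u (int r) mod int n)) {0..<n}"

definition Fm :: "nat \<Rightarrow> nat \<Rightarrow> (nat \<Rightarrow> nat) \<Rightarrow> int \<Rightarrow> int" where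
  "Fm n i \<sigma> k = k - (k - int i - 1) mod int n + (int (\<sigma> (nat (k mod int n))) - int i - 1) mod int n"

definition incr :: "nat \<Rightarrow> nat \<Rightarrow> (int \<Rightarrow> int) \<Rightarrow> bool" where
  "incr n i u \<longleftrightarrow> (\<forall>k. int i < k \<and> k < int i + int n \<longrightarrow> u k < u (k + 1))"

context
  fixes n :: nat
  assumes n2: "n \<ge> 2"
begin

abbreviation "N \<equiv> int n"

lemma Npos: "N > 0" using n2 by simp

lemma modb: "0 \<le> k mod N" "k mod N < N" using Npos by simp_all

lemma N2: "2 \<le> N" "1 \<le> N" using n2 by simp_all

lemma natmod: "nat (k mod N) < n" "int (nat (k mod N)) = k mod N"
proof -
  have a: "0 \<le> k mod N" "k mod N < N" using Npos by simp_all
  then show "nat (k mod N) < n" by linarith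
  show "int (nat (k mod N)) = k mod N" using a by simp
qed

lemma per_mod: assumes "per n u" shows "u x = u (x mod N) + (x div N) * N"
proof -
  have "u (x mod N + (x div N) * N) = u (x mod N) + (x div N) * N"
    by (rule per_mult) (use assms per_def in auto)
  then show ?thesis by (metis mod_div_mult_eq add.commute mult.commute div_mult_mod_eq)
qed

lemma per0_mod: fixes f :: "int \<Rightarrow> int" assumes "\<And>x. f (x + N) = f x" shows "f x = f (x mod N)"
proof -
  have "f (x mod N + (x div N) * N) = f (x mod N) + (x div N) * 0"
    by (rule per_mult) (use assms in auto)
  then show ?thesis by (metis mod_div_mult_eq add.commute mult.commute div_mult_mod_eq add_0_right mult_zero_right)
qed

lemma per_shift: assumes "per n u" shows "u (x + m * N) = u x + m * N"
  by (rule per_mult) (use assms per_def in auto)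

lemma res_inj: assumes "bij u" "per n u" "u x mod N = u y mod N" shows "x mod N = y mod N"
proof -
  define m where "m = (u x - u y) div N"
  have "N dvd (u x - u y)" using assms(3) by (simp add: mod_eq_dvd_iff)
  then have "u x - u y = m * N" unfolding m_def by simp
  then have "u x = u y + m * N" by simp
  also have "\<dots> = u (y + m * N)" using per_shift[OF assms(2)] by simp
  finally have "x = y + m * N" using assms(1) by (simp add: bij_def inj_eq)
  then show ?thesis by simp
qed

lemma win_eq: assumes "a < x" "x \<le> a + N" "a < y" "y \<le> a + N" "x mod N = y mod (N::int)"
  shows "x = y"
proof -
  have "N dvd (x - y)" using assms(5) by (simp add: mod_eq_dvd_iff)
  then obtain k where k: "x - y = N * k" by auto
  have "k = 0"
  proof (rule ccontr)
    assume "k \<noteq> 0"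
    then have "\<bar>N * k\<bar> \<ge> N" using Npos by (simp add: abs_mult)
    then show False using k assms by auto
  qed
  then show ?thesis using k by simp
qed


lemma win1: "{1..N} = {0<..0+N}" by auto

lemma Lres: assumes "bij v" "per n v" shows "bij_betw (\<lambda>k. v k mod N) {a<..a+N} {0..<N}"
proof -
  have inj: "inj_on (\<lambda>k. v k mod N) {a<..a+N}"
  proof (rule inj_onI)
    fix x y assume xy: "x \<in> {a<..a+N}" "y \<in> {a<..a+N}" "v x mod N = v y mod N"
    have "x mod N = y mod N" by (rule res_inj[OF assms xy(3)])
    then show "x = y" using win_eq[of a x y] xy(1,2) by simp
  qed
  have sub: "(\<lambda>k. v k mod N) ` {a<..a+N} \<subseteq> {0..<N}" using Npos by auto
  have card: "card ((\<lambda>k. v k mod N) ` {a<..a+N}) = card {0..<N}" using card_image[OF inj] by simp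
  have "(\<lambda>k. v k mod N) ` {a<..a+N} = {0..<N}" by (rule card_subset_eq) (simp, rule sub, rule card)
  then show ?thesis by (simp add: bij_betw_def inj)
qed

lemma sumS: fixes f :: "int \<Rightarrow> int" assumes "bij v" "per n v" "\<And>x. f (x + N) = f x"
  shows "(\<Sum>x\<in>{a<..a+N}. f (v x)) = (\<Sum>x\<in>{0..<N}. f x)"
proof -
  have "(\<Sum>x\<in>{a<..a+N}. f (v x)) = (\<Sum>x\<in>{a<..a+N}. f (v x mod N))"
    using per0_mod[of f] assms(3) by simp
  also have "\<dots> = (\<Sum>x\<in>{0..<N}. f x)" by (rule sum.reindex_bij_betw[OF Lres[OF assms(1,2)]])
  finally show ?thesis .
qed

abbreviation hinv :: "(int \<Rightarrow> int) \<Rightarrow> int \<Rightarrow> int" where "hinv u \<equiv> inv_into UNIV u"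

lemma per_id: "per n id" by (simp add: per_def)

lemma sumW: fixes f :: "int \<Rightarrow> int" assumes "\<And>x. f (x + N) = f x"
  shows "(\<Sum>x\<in>{a<..a+N}. f x) = (\<Sum>x\<in>{0..<N}. f x)"
proof -
  have "(\<Sum>x\<in>{a<..a+N}. f (id x)) = (\<Sum>x\<in>{0..<N}. f x)"
    by (rule sumS[OF bij_id per_id]) (rule assms)
  then show ?thesis by simp
qed

lemma sum1: fixes f :: "int \<Rightarrow> int" assumes "\<And>x. f (x + N) = f x"
  shows "(\<Sum>x\<in>{1..N}. f x) = (\<Sum>x\<in>{a<..a+N}. f x)"
proof -
  have "(\<Sum>x\<in>{a<..a+N}. f x) = (\<Sum>x\<in>{0..<N}. f x)" by (rule sumW) (rule assms)
  moreover have "(\<Sum>x\<in>{0<..0+N}. f x) = (\<Sum>x\<in>{0..<N}. f x)" by (rule sumW) (rule assms)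
  ultimately show ?thesis using win1 by simp
qed

lemma mult_affS[simp]: "mult (affS n) = (\<circ>)" by (simp add: affS_def)
lemma one_affS[simp]: "one (affS n) = id" by (simp add: affS_def)

lemma per_comp: "per n u \<Longrightarrow> per n v \<Longrightarrow> per n (u \<circ> v)" by (simp add: per_def)

lemma per_inv: assumes "bij u" "per n u" shows "per n (hinv u)"
  unfolding per_def
proof
  fix x
  have "u (hinv u x + N) = x + N" using assms by (simp add: per_def bij_is_surj surj_f_inv_f)
  then have "hinv u (u (hinv u x + N)) =  hinv u (x + N)" by simp
  then show "hinv u (x + N) =  hinv u x + N" using assms(1) by (simp add: bij_is_inj inv_f_f)
qed

lemma comp_closed: assumes "u \<in> carrier (affS n)" "v \<in> carrier (affS n)"
  shows "u \<circ> v \<in> carrier (affS n)"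
proof -
  have u: "bij u" "per n u" "Dsum n u = 0" and v: "bij v" "per n v" "Dsum n v = 0"
    using assms carrier_affS by auto
  have pf: "(\<lambda>y. u y - y) (x + N) = (\<lambda>y. u y - y) x" for x using u(2) by (simp add: per_def)
  have "Dsum n (u \<circ> v) = (\<Sum>x\<in>{1..N}. u (v x) - v x) + Dsum n v" unfolding Dsum_def by (simp add: sum.distrib[symmetric])
  also have "(\<Sum>x\<in>{1..N}. u (v x) - v x) = (\<Sum>x\<in>{0..<N}. u x - x)"
    using sumS[OF v(1,2), of "\<lambda>y. u y - y" 0, OF pf] win1 by simp
  also have "\<dots> = Dsum n u" unfolding Dsum_def using sumW[of "\<lambda>y. u y - y" 0, OF pf] win1 by simp
  finally have "Dsum n (u \<circ> v) = 0" using u v by (simp add: comp_def)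
  then show ?thesis using carrier_affS u v bij_comp per_comp by blast
qed

lemma inv_closed2: assumes "u \<in> carrier (affS n)" shows "hinv u \<in> carrier (affS n)"
proof -
  have u: "bij u" "per n u" "Dsum n u = 0" using assms carrier_affS by auto
  have pf: "(\<lambda>y. y - u y) (x + N) = (\<lambda>y. y - u y) x" for x using u(2) by (simp add: per_def)
  have "Dsum n (hinv u) = (\<Sum>x\<in>{1..N}.  hinv u x - u (hinv u x))"
    unfolding Dsum_def using u(1) by (simp add: bij_is_surj surj_f_inv_f)
  also have "\<dots> = (\<Sum>x\<in>{0..<N}. x - u x)"
    using sumS[OF bij_imp_bij_inv[OF u(1)] per_inv[OF u(1,2)], of "\<lambda>y. y - u y" 0, OF pf] win1 by simp
  also have "\<dots> = (\<Sum>x\<in>{1..N}. x - u x)" using sumW[of "\<lambda>y. y - u y" 0, OF pf] win1 by simp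
  also have "\<dots> = - Dsum n u" unfolding Dsum_def by (simp add: sum_negf[symmetric])
  finally have "Dsum n (hinv u) = 0" using u by simp
  then show ?thesis using carrier_affS u bij_imp_bij_inv per_inv by blast
qed

lemma id_closed: "id \<in> carrier (affS n)"
  using carrier_affS per_id by (simp add: Dsum_def)

lemma grp: "group (affS n)"
proof (rule groupI)
  fix x assume x: "x \<in> carrier (affS n)"
  show "\<exists>y\<in>carrier (affS n). y \<otimes>\<^bsub>affS n\<^esub> x = \<one>\<^bsub>affS n\<^esub>"
    using x inv_closed2 carrier_affS by (auto intro!: bexI[of _ "hinv x"] simp: bij_is_inj inv_o_cancel)
qed (auto simp: comp_closed id_closed o_assoc)

lemma inv_affS: assumes "u \<in> carrier (affS n)" shows "inv\<^bsub>affS n\<^esub> u = hinv u"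
proof -
  have b: "bij u" using assms carrier_affS by auto
  show ?thesis
    by (rule group.inv_equality[OF grp]) (use b assms inv_closed2 in \<open>auto simp: bij_is_inj inv_o_cancel\<close>)
qed


lemma gen_s_eq: assumes "j < n" shows "gen_s n j = sg n j"
proof (rule ext)
  fix x
  define p where "p = (x - 1) mod N + 1"
  define q where "q = (x - 1) div N"
  have pm: "0 \<le> (x - 1) mod N" "(x - 1) mod N < N" using Npos by simp_all
  have p1: "1 \<le> p" "p \<le> N" using pm by (simp_all add: p_def)
  have xe: "x = p + N*q" unfolding p_def q_def using div_mult_mod_eq[of "x-1" N] by (simp add: algebra_simps)
  have xm: "x mod N = (if p = N then 0 else p)" using xe p1 by auto
  have fw: "from_window n w x = w p + N * q" for w unfolding from_window_def p_def q_def by simp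
  show "gen_s n j x = sg n j x"
  proof (cases "j = 0")
    case True
    then have g: "gen_s n j x = (if p = 1 then 0 else if p = N then N + 1 else p) + N * q"
      by (simp add: gen_s_def fw)
    show ?thesis unfolding g sg_def xm using p1 n2 xe True by auto
  next
    case False
    then have g: "gen_s n j x = (if p = int j then int j + 1 else if p = int j + 1 then int j else p) + N * q"
      by (simp add: gen_s_def fw)
    have "1 \<le> int j" "int j < N" using assms False by auto
    moreover have "(int j + 1) mod N = (if int j + 1 = N then 0 else int j + 1)" using assms by auto
    ultimately show ?thesis unfolding g sg_def xm using p1 n2 xe False by auto
  qed
qed


lemma sg_per: "per n (sg n j)" unfolding per_def sg_def by auto

lemma j_ne: assumes "j < n" shows "int j \<noteq> (int j + 1) mod N"
proof -
  have "(int j + 1) mod N = (if int j + 1 = N then 0 else int j + 1)" using assms by auto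
  then show ?thesis using n2 by auto
qed

lemma sg_sg: assumes "j < n" shows "sg n j (sg n j x) = x"
proof -
  have a: "(x + 1) mod N = (x mod N + 1) mod N" by (simp add: mod_add_left_eq)
  have b: "(x - 1) mod N = (x mod N - 1) mod N" by (simp add: mod_diff_left_eq)
  have jm: "int j mod N = int j" using assms by simp
  have c: "((int j + 1) mod N - 1) mod N = int j" using jm by (simp add: mod_diff_left_eq)
  show ?thesis
  proof (cases "x mod N = int j")
    case True
    then show ?thesis using j_ne[OF assms] a unfolding sg_def by auto
  next
    case F: False
    show ?thesis
    proof (cases "x mod N = (int j + 1) mod N")
      case True
      then have "(x - 1) mod N = int j" using b c by simp
      then show ?thesis using True F unfolding sg_def by auto
    next
      case False then show ?thesis using F unfolding sg_def by auto
    qed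
  qed
qed

lemma sg_bij: assumes "j < n" shows "bij (sg n j)"
  by (rule o_bij[of "sg n j"]) (auto simp: sg_sg[OF assms])

lemma Gmem: assumes "bij u" "per n u" "\<And>x. a < x \<Longrightarrow> x \<le> a + N \<Longrightarrow> a < u x \<and> u x \<le> a + N"
  shows "u \<in> carrier (affS n)"
proof -
  let ?B = "{a<..a+N}"
  have inj: "inj_on u ?B" using assms(1) bij_is_inj inj_on_subset by blast
  have sub: "u ` ?B \<subseteq> ?B" using assms(3) by auto
  have "u ` ?B = ?B" by (rule card_subset_eq) (use sub card_image[OF inj] in auto)
  then have bb: "bij_betw u ?B ?B" using inj by (simp add: bij_betw_def)
  have pf: "(\<lambda>y. u y - y) (x + N) = (\<lambda>y. u y - y) x" for x using assms(2) by (simp add: per_def)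
  have "Dsum n u = (\<Sum>x\<in>?B. u x - x)" unfolding Dsum_def by (rule sum1) (rule pf)
  also have "\<dots> = (\<Sum>x\<in>?B. u x) - (\<Sum>x\<in>?B. x)" by (simp add: sum_subtractf)
  also have "(\<Sum>x\<in>?B. u x) = (\<Sum>x\<in>?B. x)" using sum.reindex_bij_betw[OF bb, of id] by simp
  finally show ?thesis using carrier_affS assms by simp
qed

lemma sg_carrier: assumes "j < n" shows "sg n j \<in> carrier (affS n)"
proof (rule Gmem[OF sg_bij[OF assms] sg_per, of "int j - 1"])
  fix x assume x: "int j - 1 < x" "x \<le> int j - 1 + N"
  have jm: "int j mod N = int j" using assms by simp
  have e1: "x mod N = int j \<Longrightarrow> x = int j"
    using win_eq[of "int j - 1" x "int j"] x jm n2 by auto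
  have e2: "x mod N = (int j + 1) mod N \<Longrightarrow> x = int j + 1"
    using win_eq[of "int j - 1" x "int j + 1"] x n2 by auto
  show "int j - 1 < sg n j x \<and> sg n j x \<le> int j - 1 + N"
    unfolding sg_def using e1 e2 x n2 by auto
qed

lemma gen_carrier: assumes "j < n" shows "gen_s n j \<in> carrier (affS n)"
  using sg_carrier[OF assms] gen_s_eq[OF assms] by simp


lemma Pc_comp: "Pc c u \<Longrightarrow> Pc c v \<Longrightarrow> Pc c (u \<circ> v)" by (simp add: Pc_def)

lemma Pc_inv: assumes "bij u" "Pc c u" shows "Pc c (hinv u)"
  unfolding Pc_def
proof
  fix k
  have "(u (hinv u k) \<le> int c) = (hinv u k \<le> int c)" using assms(2) Pc_def by blast
  then show "(hinv u k \<le> int c) = (k \<le> int c)" using assms(1) by (simp add: bij_is_surj surj_f_inv_f)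
qed

lemma Stab_subgroup: "subgroup (Stab n J) (affS n)"
proof
  show "Stab n J \<subseteq> carrier (affS n)" by (auto simp: Stab_def)
next
  fix x y assume "x \<in> Stab n J" "y \<in> Stab n J"
  then show "x \<otimes>\<^bsub>affS n\<^esub> y \<in> Stab n J" by (auto simp: Stab_def comp_closed Pc_comp)
next
  show "\<one>\<^bsub>affS n\<^esub> \<in> Stab n J" by (auto simp: Stab_def id_closed Pc_def)
next
  fix x assume x: "x \<in> Stab n J"
  then have b: "bij x" "x \<in> carrier (affS n)" using carrier_affS by (auto simp: Stab_def)
  show "inv\<^bsub>affS n\<^esub> x \<in> Stab n J"
    using x b inv_affS[OF b(2)] inv_closed2[OF b(2)] Pc_inv by (auto simp: Stab_def)
qed

lemma sg_Pc: assumes "j < n" "c < n" "c \<noteq> j" shows "Pc c (sg n j)"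
  unfolding Pc_def
proof
  fix k
  have cm: "int c mod N = int c" "int j mod N = int j" using assms by auto
  have 1: "k mod N = int j \<Longrightarrow> k \<noteq> int c" using cm assms(3) by auto
  have 2: "k mod N = (int j + 1) mod N \<Longrightarrow> k \<noteq> int c + 1"
  proof
    assume "k mod N = (int j + 1) mod N" "k = int c + 1"
    then have "(int c + 1) mod N = (int j + 1) mod N" by simp
    then have e: "(int c + 1) mod N = (int j + 1) mod N" .
    have "int c mod N = ((int c + 1) mod N - 1) mod N" by (simp add: mod_diff_left_eq)
    also have "\<dots> = ((int j + 1) mod N - 1) mod N" using e by simp
    also have "\<dots> = int j mod N" by (simp add: mod_diff_left_eq)
    finally have "int c mod N = int j mod N" .
    then show False using cm assms(3) by simp
  qed
  show "(sg n j k \<le> int c) = (k \<le> int c)" unfolding sg_def using 1 2 by auto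
qed

lemma gen_Stab: assumes "j \<in> J" "j < n" shows "gen_s n j \<in> Stab n J"
proof -
  have "Pc c (sg n j)" if "c \<in> {0..<n} - J" for c
    using that assms(1) by (intro sg_Pc[OF assms(2)]) auto
  then show ?thesis unfolding Stab_def gen_s_eq[OF assms(2)] using sg_carrier[OF assms(2)] by auto
qed

lemma gen_sub_Stab: assumes "J \<subseteq> {0..<n}" shows "generate (affS n) (gen_s n ` J) \<subseteq> Stab n J"
  by (rule group.generate_subgroup_incl[OF grp _ Stab_subgroup]) (use gen_Stab assms in auto)

lemma sq_ineq: fixes a b :: int assumes "a > b" shows "b^2 + (a-1)^2 < a^2 + (b-1)^2"
  using assms by (simp add: power2_eq_square algebra_simps)


lemma descent: assumes "u \<in> carrier (affS n)" "u \<noteq> id"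
  shows "\<exists>i<n. u (int i) > u (int i + 1)"
proof (rule ccontr)
  assume A: "\<not> ?thesis"
  have u: "bij u" "per n u" "Dsum n u = 0" using assms carrier_affS by auto
  have s1: "u k < u (k + 1)" for k
  proof -
    define r where "r = k mod N"
    define q where "q = k div N"
    have r: "0 \<le> r" "r < N" using Npos by (auto simp: r_def)
    have ke: "k = r + q * N" by (simp add: r_def q_def)
    have nr: "int (nat r) = r" unfolding r_def by (rule natmod)
    have "nat r < n" unfolding r_def by (rule natmod)
    then have "\<not> u (int (nat r)) > u (int (nat r) + 1)" using A by blast
    then have "u r \<le> u (r + 1)" using nr by simp
    moreover have "u r \<noteq> u (r + 1)" using u(1) by (metis bij_is_inj inj_eq add_cancel_left_right one_neq_zero)
    ultimately have "u r < u (r + 1)" by simp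
    moreover have "u k = u r + q * N" using per_shift[OF u(2)] ke by simp
    moreover have "u (k + 1) = u (r + 1) + q * N" using per_shift[OF u(2), of "r+1" q] ke by (simp add: algebra_simps)
    ultimately show ?thesis by simp
  qed
  have grow: "u (k + int m) \<ge> u k + int m" for k m
  proof (induction m)
    case 0 then show ?case by simp
  next
    case (Suc m)
    have "u (k + int m + 1) > u (k + int m)" using s1 by simp
    then show ?case using Suc by (simp add: algebra_simps)
  qed
  have s2: "u (k + 1) = u k + 1" for k
  proof (rule ccontr)
    assume "u (k + 1) \<noteq> u k + 1"
    then have "u (k + 1) \<ge> u k + 2" using s1[of k] by simp
    moreover have "u (k + 1 + int (n - 1)) \<ge> u (k + 1) + int (n - 1)" by (rule grow)
    moreover have "k + 1 + int (n - 1) = k + N" using n2 by simp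
    moreover have "u (k + N) = u k + N" using u(2) per_def by blast
    ultimately show False using n2 by simp
  qed
  have s3: "u k = u 0 + k" for k
  proof (induction k rule: int_induct[where k = 0])
    case base then show ?case by simp
  next
    case (step1 i) then show ?case using s2[of i] by simp
  next
    case (step2 i) then show ?case using s2[of "i - 1"] by simp
  qed
  have s4: "u x - x = u 0" for x using s3[of x] by linarith
  have "Dsum n u = (\<Sum>x\<in>{1..N}. u 0)" unfolding Dsum_def using s4 by simp
  also have "\<dots> = N * u 0" by simp
  finally have u0: "u 0 = 0" using u(3) Npos by simp
  have "u = id"
  proof (rule ext)
    fix x show "u x = id x" using s3[of x] u0 by simp
  qed
  then show False using assms(2) by simp
qed

lemma decrease: assumes "u \<in> carrier (affS n)" "u k > u (k + 1)" "r = nat (k mod N)"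
  shows "Msq n (u \<circ> sg n r) < Msq n u"
proof -
  have u: "bij u" "per n u" using assms carrier_affS by auto
  have rr: "int r = k mod N" "r < n" using assms(3) natmod by auto
  let ?s = "sg n r"
  let ?W = "{k-1<..k-1+N}"
  let ?f = "\<lambda>x. (u x - x)^2"
  let ?g = "\<lambda>x. ((u \<circ> ?s) x - x)^2"
  have pf: "?f (x + N) = ?f x" for x using u(2) by (simp add: per_def)
  have pg: "?g (x + N) = ?g x" for x using per_comp[OF u(2) sg_per] by (simp add: per_def)
  have Mu: "Msq n u = sum ?f ?W" unfolding Msq_def by (rule sum1) (rule pf)
  have Mv: "Msq n (u \<circ> ?s) = sum ?g ?W" unfolding Msq_def by (rule sum1) (rule pg)
  have kW: "k \<in> ?W" "k + 1 \<in> ?W" using n2 by auto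
  have ne: "int r \<noteq> (int r + 1) mod N" by (rule j_ne[OF rr(2)])
  have k1: "(k + 1) mod N = (int r + 1) mod N" using rr by (simp add: mod_add_left_eq)
  have sk: "?s k = k + 1" using rr unfolding sg_def by simp
  have sk1: "?s (k + 1) = k" using k1 ne unfolding sg_def by auto
  have sx: "?s x = x" if "x \<in> ?W - {k} - {k+1}" for x
  proof -
    have "x mod N \<noteq> int r" using win_eq[of "k-1" x k] that rr by auto
    moreover have "x mod N \<noteq> (int r + 1) mod N" using win_eq[of "k-1" x "k+1"] that k1 n2 by auto
    ultimately show ?thesis unfolding sg_def by auto
  qed
  have fin: "finite (?W - {k})" by simp
  have k1W: "k + 1 \<in> ?W - {k}" using kW by simp
  have "sum ?f ?W = ?f k + (?f (k+1) + sum ?f (?W - {k} - {k+1}))"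
    using sum.remove[OF _ kW(1), of ?f] sum.remove[OF fin k1W, of ?f] by simp
  moreover have "sum ?g ?W = ?g k + (?g (k+1) + sum ?g (?W - {k} - {k+1}))"
    using sum.remove[OF _ kW(1), of ?g] sum.remove[OF fin k1W, of ?g] by simp
  moreover have "sum ?g (?W - {k} - {k+1}) = sum ?f (?W - {k} - {k+1})"
    by (rule sum.cong) (auto simp: sx)
  moreover have "?g k + ?g (k+1) < ?f k + ?f (k+1)"
    using sq_ineq[of "u (k+1) - k" "u k - k"] assms(2) sk sk1 by (simp add: algebra_simps)
  ultimately show ?thesis using Mu Mv by simp
qed

lemma Msq_nonneg: "Msq n u \<ge> 0" unfolding Msq_def by (simp add: sum_nonneg)


lemma Stab_sub_gen: assumes "J \<subseteq> {0..<n}" "u \<in> Stab n J"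
  shows "u \<in> generate (affS n) (gen_s n ` J)"
proof -
  have "\<forall>u. nat (Msq n u) = m \<longrightarrow> u \<in> Stab n J \<longrightarrow> u \<in> generate (affS n) (gen_s n ` J)" for m
  proof (induction m rule: less_induct)
    case (less m)
    show ?case
    proof (intro allI impI)
      fix u assume m: "nat (Msq n u) = m" and uS: "u \<in> Stab n J"
      have uc: "u \<in> carrier (affS n)" using uS by (simp add: Stab_def)
      show "u \<in> generate (affS n) (gen_s n ` J)"
      proof (cases "u = id")
        case True
        then show ?thesis using generate.one[of "affS n"] by simp
      next
        case False
        obtain i where i: "i < n" "u (int i) > u (int i + 1)" using descent[OF uc False] by blast
        have iJ: "i \<in> J"
        proof (rule ccontr)
          assume "i \<notin> J"
          then have "Pc i u" using uS i(1) by (auto simp: Stab_def)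
          then have "u (int i) \<le> int i" "\<not> u (int i + 1) \<le> int i" unfolding Pc_def by auto
          then show False using i(2) by simp
        qed
        let ?v = "u \<circ> sg n i"
        have vS: "?v \<in> Stab n J"
          using subgroup.m_closed[OF Stab_subgroup uS gen_Stab[OF iJ i(1)]] gen_s_eq[OF i(1)] by simp
        have "Msq n ?v < Msq n u" by (rule decrease[OF uc i(2)]) (use i(1) in simp)
        then have "nat (Msq n ?v) < m" using m Msq_nonneg[of ?v] by simp
        then have vg: "?v \<in> generate (affS n) (gen_s n ` J)" using less vS by blast
        have gg: "gen_s n i \<in> generate (affS n) (gen_s n ` J)" using iJ by (auto intro: generate.incl)
        have "u = ?v \<otimes>\<^bsub>affS n\<^esub> gen_s n i" using gen_s_eq[OF i(1)] sg_sg[OF i(1)] by (auto simp: fun_eq_iff)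
        then show ?thesis using generate.eng[OF vg gg] by simp
      qed
    qed
  qed
  then show ?thesis using assms(2) by blast
qed

lemma Stab_gen: assumes "J \<subseteq> {0..<n}" shows "generate (affS n) (gen_s n ` J) = Stab n J"
  using gen_sub_Stab[OF assms] Stab_sub_gen[OF assms] by blast

lemma Kmax_Stab: assumes "i < n" shows "Kmax n i = Stab n ({0..<n} - {i})"
  unfolding Kmax_def by (rule Stab_gen) auto

lemma Kmax_eq: assumes "i < n" shows "Kmax n i = {u \<in> carrier (affS n). Pc i u}"
  unfolding Kmax_Stab[OF assms] Stab_def using assms by auto


lemma mod_res: assumes "per n u" shows "u x mod N = u (x mod N) mod N"
  using per_mod[OF assms, of x] by simp

lemma phi_Bij: assumes "u \<in> carrier (affS n)" shows "phi n u \<in> Bij {0..<n}"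
proof -
  have u: "bij u" "per n u" using assms carrier_affS by auto
  let ?h = "\<lambda>r. nat (u (int r) mod N)"
  have inj: "inj_on ?h {0..<n}"
  proof (rule inj_onI)
    fix a b assume ab: "a \<in> {0..<n}" "b \<in> {0..<n}" "?h a = ?h b"
    have "int (?h a) = int (?h b)" using ab(3) by simp
    then have "u (int a) mod N = u (int b) mod N" using natmod(2)[of "u (int a)"] natmod(2)[of "u (int b)"] by simp
    then have "int a mod N = int b mod N" by (rule res_inj[OF u])
    then show "a = b" using ab by simp
  qed
  have sub: "?h ` {0..<n} \<subseteq> {0..<n}" using natmod(1) by auto
  have "?h ` {0..<n} = {0..<n}" by (rule card_subset_eq) (simp, rule sub, use card_image[OF inj] in simp)
  then have "bij_betw ?h {0..<n} {0..<n}" using inj by (simp add: bij_betw_def)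
  then have "bij_betw (phi n u) {0..<n} {0..<n}" unfolding phi_def
    by (rule bij_betw_cong[THEN iffD1, rotated]) auto
  then show ?thesis unfolding Bij_def phi_def by auto
qed

lemma phi_mult: assumes "u \<in> carrier (affS n)" "v \<in> carrier (affS n)"
  shows "phi n (u \<circ> v) = compose {0..<n} (phi n u) (phi n v)"
proof (rule ext)
  fix r
  have u: "per n u" using assms carrier_affS by auto
  have "nat (u (v (int r)) mod N) = nat (u (int (nat (v (int r) mod N))) mod N)"
    using mod_res[OF u, of "v (int r)"] natmod(2)[of "v (int r)"] by simp
  then show "phi n (u \<circ> v) r = compose {0..<n} (phi n u) (phi n v) r"
    unfolding phi_def compose_def using natmod(1)[of "v (int r)"] by auto
qed

lemma blockmap: assumes "per n u" "Pc i u" "int i < x" "x \<le> int i + N"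
  shows "int i < u x \<and> u x \<le> int i + N"
proof -
  have "u (x - N) \<le> int i" using assms(2,4) unfolding Pc_def by auto
  moreover have "u (x - N) = u x - N" using per_shift[OF assms(1), of x "-1"] by simp
  moreover have "(u x \<le> int i) = (x \<le> int i)" using assms(2) unfolding Pc_def by blast
  ultimately show ?thesis using assms(3) by linarith
qed

lemma block_rep: "x = (int i + 1 + (x - int i - 1) mod N) + ((x - int i - 1) div N) * N"
  using div_mult_mod_eq[of "x - int i - 1" N] by (simp add: algebra_simps)

lemma block_eq: assumes "per n u" "per n v" "\<And>x. int i < x \<Longrightarrow> x \<le> int i + N \<Longrightarrow> u x = v x"
  shows "u = v"
proof (rule ext)
  fix x
  let ?x0 = "int i + 1 + (x - int i - 1) mod N" and ?m = "(x - int i - 1) div N"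
  have x0: "int i < ?x0" "?x0 \<le> int i + N" using modb[of "x - int i - 1"] by auto
  have "u x = u ?x0 + ?m * N" using per_shift[OF assms(1), of ?x0 ?m] block_rep[of x i] by simp
  also have "\<dots> = v ?x0 + ?m * N" using assms(3)[OF x0] by simp
  also have "\<dots> = v x" using per_shift[OF assms(2), of ?x0 ?m] block_rep[of x i] by simp
  finally show "u x = v x" .
qed

lemma phi_inj: assumes "i < n" shows "inj_on (phi n) (Kmax n i)"
proof (rule inj_onI)
  fix u v assume uv: "u \<in> Kmax n i" "v \<in> Kmax n i" "phi n u = phi n v"
  have u: "per n u" "Pc i u" and v: "per n v" "Pc i v" using uv Kmax_eq[OF assms] carrier_affS by auto
  show "u = v"
  proof (rule block_eq[OF u(1) v(1)])
    fix x assume x: "int i < x" "x \<le> int i + N"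
    have r: "nat (x mod N) < n" "int (nat (x mod N)) = x mod N" by (rule natmod)+
    have "phi n u (nat (x mod N)) = phi n v (nat (x mod N))" using uv(3) by simp
    then have "nat (u (x mod N) mod N) = nat (v (x mod N) mod N)" unfolding phi_def using r by simp
    then have "u (x mod N) mod N = v (x mod N) mod N"
      using natmod(2)[of "u (x mod N)"] natmod(2)[of "v (x mod N)"] by metis
    then have "u x mod N = v x mod N" using mod_res[OF u(1)] mod_res[OF v(1)] by simp
    then show "u x = v x" using win_eq[of "int i" "u x" "v x"] blockmap[OF u x] blockmap[OF v x] by simp
  qed
qed


lemma Fm_parts: assumes "\<sigma> (nat (k mod N)) < n"
  shows "Fm n i \<sigma> k = int i + 1 + ((k - int i - 1) div N) * N + (int (\<sigma> (nat (k mod N))) - int i - 1) mod N"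
    and "(Fm n i \<sigma> k - int i - 1) div N = (k - int i - 1) div N"
    and "(Fm n i \<sigma> k - int i - 1) mod N = (int (\<sigma> (nat (k mod N))) - int i - 1) mod N"
    and "Fm n i \<sigma> k mod N = int (\<sigma> (nat (k mod N)))"
proof -
  let ?s = "int (\<sigma> (nat (k mod N)))"
  let ?q = "(k - int i - 1) div N" and ?e = "(?s - int i - 1) mod N"
  have e: "0 \<le> ?e" "?e < N" using modb[of "?s - int i - 1"] by auto
  show F: "Fm n i \<sigma> k = int i + 1 + ?q * N + ?e"
    unfolding Fm_def using block_rep[of k i] by (simp add: algebra_simps)
  have F2: "Fm n i \<sigma> k - int i - 1 = ?e + ?q * N" using F by simp
  show "(Fm n i \<sigma> k - int i - 1) div N = ?q" unfolding F2 using e by simp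
  show "(Fm n i \<sigma> k - int i - 1) mod N = ?e" unfolding F2 using e by simp
  have "Fm n i \<sigma> k mod N = ((int i + 1 + ?e) + ?q * N) mod N" unfolding F by (simp add: algebra_simps)
  also have "\<dots> = (int i + 1 + ?e) mod N" by (rule mod_mult_self1)
  also have "\<dots> = (int i + 1 + (?s - int i - 1)) mod N" by (simp add: mod_add_right_eq)
  also have "\<dots> = ?s" using assms by simp
  finally show "Fm n i \<sigma> k mod N = ?s" .
qed

lemma Fm_comp: assumes "\<And>r. r < n \<Longrightarrow> \<sigma> r < n" "\<And>r. r < n \<Longrightarrow> \<tau> (\<sigma> r) = r"
  shows "Fm n i \<tau> (Fm n i \<sigma> k) = k"
proof -
  let ?y = "Fm n i \<sigma> k"
  have r: "nat (k mod N) < n" by (rule natmod)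
  have s: "\<sigma> (nat (k mod N)) < n" using assms(1) r by simp
  have ym: "nat (?y mod N) = \<sigma> (nat (k mod N))" using Fm_parts(4)[where \<sigma>=\<sigma> and k=k and i=i, OF s] by simp
  have "Fm n i \<tau> ?y = ?y - (?y - int i - 1) mod N + (int (\<tau> (\<sigma> (nat (k mod N)))) - int i - 1) mod N"
    unfolding Fm_def[of n i \<tau>] ym by simp
  also have "\<dots> = ?y - (int (\<sigma> (nat (k mod N))) - int i - 1) mod N + (k mod N - int i - 1) mod N"
    using Fm_parts(3)[where \<sigma>=\<sigma> and k=k and i=i, OF s] assms(2)[OF r] natmod(2)[of k] by simp
  also have "\<dots> = int i + 1 + ((k - int i - 1) div N) * N + (k - int i - 1) mod N"
  proof -
    have "(k mod N - (int i + 1)) mod N = (k - (int i + 1)) mod N" by (rule mod_diff_left_eq)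
    then have km: "(k mod N - int i - 1) mod N = (k - int i - 1) mod N" by (simp add: algebra_simps)
    show ?thesis using Fm_parts(1)[where \<sigma>=\<sigma> and k=k and i=i, OF s] km by linarith
  qed
  also have "\<dots> = k" using block_rep[of k i] by simp
  finally show ?thesis .
qed

lemma Fm_per: "per n (Fm n i \<sigma>)"
  unfolding per_def
proof
  fix x
  have "(x + N - int i - 1) mod N = ((x - int i - 1) + 1 * N) mod N" by (simp add: algebra_simps)
  also have "\<dots> = (x - int i - 1) mod N" by (rule mod_mult_self1)
  finally have h: "(x + N - int i - 1) mod N = (x - int i - 1) mod N" .
  show "Fm n i \<sigma> (x + N) = Fm n i \<sigma> x + N" unfolding Fm_def using h by simp
qed

lemma Fm_Pc: assumes "\<And>r. r < n \<Longrightarrow> \<sigma> r < n" shows "Pc i (Fm n i \<sigma>)"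
  unfolding Pc_def
proof
  fix k
  have r: "nat (k mod N) < n" by (rule natmod)
  let ?q = "(k - int i - 1) div N"
  let ?e = "(int (\<sigma> (nat (k mod N))) - int i - 1) mod N" and ?d = "(k - int i - 1) mod N"
  have e: "0 \<le> ?e" "?e < N" "0 \<le> ?d" "?d < N"
    using modb[of "int (\<sigma> (nat (k mod N))) - int i - 1"] modb[of "k - int i - 1"] by auto
  have F: "Fm n i \<sigma> k = int i + 1 + ?q * N + ?e" by (rule Fm_parts(1)) (use assms r in simp)
  have K: "k = int i + 1 + ?q * N + ?d" using block_rep[of k i] by simp
  have a: "?q * N \<le> - N" if "?q \<le> -1"
  proof -
    have "?q * N \<le> (-1) * N" by (rule mult_right_mono) (use that in simp_all)
    then show ?thesis by simp
  qed
  have b: "?q \<ge> 0 \<Longrightarrow> ?q * N \<ge> 0" using Npos by simp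
  show "(Fm n i \<sigma> k \<le> int i) = (k \<le> int i)"
  proof (cases "?q \<ge> 0")
    case True then show ?thesis using F K b e by linarith
  next
    case False then show ?thesis using F K a e by linarith
  qed
qed

lemma Fm_carrier: assumes "\<sigma> \<in> Bij {0..<n}" "i < n"
  shows "Fm n i \<sigma> \<in> Kmax n i" "phi n (Fm n i \<sigma>) = \<sigma>"
proof -
  have bb: "bij_betw \<sigma> {0..<n} {0..<n}" and exts: "\<sigma> \<in> extensional {0..<n}" using assms by (auto simp: Bij_def)
  let ?t = "inv_into {0..<n} \<sigma>"
  have s1: "\<sigma> r < n" if "r < n" for r using bb that bij_betwE by fastforce
  have t1: "?t r < n" if "r < n" for r using bij_betw_inv_into[OF bb] that bij_betwE by fastforce
  have ts: "?t (\<sigma> r) = r" if "r < n" for r using bij_betw_inv_into_left[OF bb] that by simp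
  have st: "\<sigma> (?t r) = r" if "r < n" for r using bij_betw_inv_into_right[OF bb] that by simp
  have c1: "Fm n i ?t \<circ> Fm n i \<sigma> = id" using Fm_comp[of \<sigma> ?t] s1 ts by (auto simp: fun_eq_iff)
  have c2: "Fm n i \<sigma> \<circ> Fm n i ?t = id" using Fm_comp[of ?t \<sigma>] t1 st by (auto simp: fun_eq_iff)
  have bj: "bij (Fm n i \<sigma>)" by (rule o_bij[OF c1 c2])
  have pc: "Pc i (Fm n i \<sigma>)" by (rule Fm_Pc) (use s1 in auto)
  have "Fm n i \<sigma> \<in> carrier (affS n)"
    by (rule Gmem[OF bj Fm_per, of "int i"]) (rule blockmap[OF Fm_per pc])
  then show "Fm n i \<sigma> \<in> Kmax n i" using Kmax_eq[OF assms(2)] pc by simp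
  show "phi n (Fm n i \<sigma>) = \<sigma>"
  proof (rule ext)
    fix r
    show "phi n (Fm n i \<sigma>) r = \<sigma> r"
    proof (cases "r < n")
      case True
      have "Fm n i \<sigma> (int r) mod N = int (\<sigma> r)" using Fm_parts(4)[where \<sigma>=\<sigma> and k="int r" and i=i] s1 True by simp
      then show ?thesis unfolding phi_def using True by simp
    next
      case False then show ?thesis unfolding phi_def using exts by (simp add: extensional_def)
    qed
  qed
qed


lemma phi_gen: assumes "j < n"
  shows "phi n (gen_s n j) = restrict (transpose j ((j + 1) mod n)) {0..<n}"
proof (rule ext)
  fix r
  show "phi n (gen_s n j) r = restrict (transpose j ((j + 1) mod n)) {0..<n} r"
  proof (cases "r < n")
    case False then show ?thesis unfolding phi_def by simp
  next
    case True
    have jm: "int ((j + 1) mod n) = (int j + 1) mod N" by (simp add: of_nat_mod add.commute)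
    have rm: "int r mod N = int r" using True by simp
    have "nat (sg n j (int r) mod N) = transpose j ((j + 1) mod n) r"
    proof (cases "r = j")
      case True
      then show ?thesis unfolding sg_def using rm jm by (simp add: transpose_def)
    next
      case rj: False
      show ?thesis
      proof (cases "r = (j + 1) mod n")
        case True
        then have ir: "int r = (int j + 1) mod N" using jm by simp
        have "(int r - 1) mod N = int j"
          using ir assms by (simp add: mod_diff_left_eq)
        then show ?thesis unfolding sg_def using rm ir rj True by (simp add: transpose_def)
      next
        case False
        have "int r \<noteq> (int j + 1) mod N" using False jm by (metis of_nat_eq_iff)
        then show ?thesis unfolding sg_def using rm rj False by (simp add: transpose_def)
      qed
    qed
    then show ?thesis unfolding phi_def gen_s_eq[OF assms] using True by simp
  qed
qed

lemma iso_part: assumes "i < n"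
  shows "phi n \<in> iso ((affS n)\<lparr>carrier := Kmax n i\<rparr>) (BijGroup {0..<n})"
proof -
  have Kc: "Kmax n i \<subseteq> carrier (affS n)" using Kmax_eq[OF assms] by auto
  have hom: "phi n \<in> hom ((affS n)\<lparr>carrier := Kmax n i\<rparr>) (BijGroup {0..<n})"
  proof -
    have "phi n (x \<circ> y) = compose {0..<n} (phi n x) (phi n y)" if "x \<in> Kmax n i" "y \<in> Kmax n i" for x y
      using phi_mult that Kc by blast
    then show ?thesis unfolding hom_def using Kc phi_Bij by (auto simp: BijGroup_def)
  qed
  have "phi n ` Kmax n i = Bij {0..<n}"
  proof
    show "phi n ` Kmax n i \<subseteq> Bij {0..<n}" using Kc phi_Bij by auto
    show "Bij {0..<n} \<subseteq> phi n ` Kmax n i"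
    proof
      fix \<sigma> assume "\<sigma> \<in> Bij {0..<n}"
      then show "\<sigma> \<in> phi n ` Kmax n i" using Fm_carrier[OF _ assms] by (metis image_eqI)
    qed
  qed
  then have "bij_betw (phi n) (Kmax n i) (Bij {0..<n})" using phi_inj[OF assms] by (simp add: bij_betw_def)
  then show ?thesis using hom unfolding iso_def by (simp add: BijGroup_def)
qed


lemma Pc_gen: assumes "per n u" "Pc c u" shows "(u x \<le> int c + m * N) = (x \<le> int c + m * N)"
proof -
  have "u (x - m * N) = u x - m * N" using per_shift[OF assms(1), of x "-m"] by simp
  moreover have "(u (x - m * N) \<le> int c) = (x - m * N \<le> int c)" using assms(2) Pc_def by blast
  ultimately show ?thesis by linarith
qed

lemma sg_K: assumes "r < n" "i < n" "r \<noteq> i" shows "sg n r \<in> Kmax n i"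
  using Kmax_eq[OF assms(2)] sg_carrier[OF assms(1)] sg_Pc[OF assms(1,2)] assms(3) by auto

lemma id_K: assumes "i < n" shows "id \<in> Kmax n i"
  using Kmax_eq[OF assms] id_closed by (simp add: Pc_def)

lemma comp_K: assumes "i < n" "u \<in> Kmax n i" "v \<in> Kmax n i" shows "u \<circ> v \<in> Kmax n i"
  using Kmax_eq[OF assms(1)] assms comp_closed Pc_comp by auto

lemma lemE: assumes "i < n" "j < n" "i \<noteq> j" "a \<in> Kmax n j"
  shows "\<exists>b\<in>Kmax n i. a \<circ> b \<in> Kmax n j \<and> incr n i (a \<circ> b)"
proof -
  have "\<forall>a. nat (Msq n a) = m \<longrightarrow> a \<in> Kmax n j \<longrightarrow> (\<exists>b\<in>Kmax n i. a \<circ> b \<in> Kmax n j \<and> incr n i (a \<circ> b))" for m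
  proof (induction m rule: less_induct)
    case (less m)
    show ?case
    proof (intro allI impI)
      fix a assume m: "nat (Msq n a) = m" and aK: "a \<in> Kmax n j"
      have ac: "a \<in> carrier (affS n)" "Pc j a" using aK Kmax_eq[OF assms(2)] by auto
      have au: "bij a" "per n a" using ac carrier_affS by auto
      show "\<exists>b\<in>Kmax n i. a \<circ> b \<in> Kmax n j \<and> incr n i (a \<circ> b)"
      proof (cases "incr n i a")
        case True
        then show ?thesis using id_K[OF assms(1)] aK by (intro bexI[of _ id]) auto
      next
        case False
        then obtain k where k: "int i < k" "k < int i + N" "\<not> a k < a (k + 1)" unfolding incr_def by auto
        have "a k \<noteq> a (k + 1)" using au(1) by (metis bij_is_inj inj_eq add_cancel_left_right one_neq_zero)
        then have dk: "a k > a (k + 1)" using k(3) by simp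
        define r where "r = nat (k mod N)"
        have rr: "r < n" "int r = k mod N" unfolding r_def by (rule natmod)+
        have ri: "r \<noteq> i"
        proof
          assume "r = i"
          then have "k mod N = (int i + N) mod N" using rr by simp
          then have "k = int i + N" using win_eq[of "int i" k "int i + N"] k by simp
          then show False using k by simp
        qed
        have rj: "r \<noteq> j"
        proof
          assume "r = j"
          then have ke: "k = int j + (k div N) * N" using rr div_mult_mod_eq[of k N] by (simp add: algebra_simps)
          have "a k \<le> int j + (k div N) * N" using Pc_gen[OF au(2) ac(2), of k "k div N"] ke by simp
          moreover have "\<not> a (k + 1) \<le> int j + (k div N) * N"
            using Pc_gen[OF au(2) ac(2), of "k + 1" "k div N"] ke by simp
          ultimately show False using dk by simp
        qed
        let ?s = "sg n r"
        have sI: "?s \<in> Kmax n i" by (rule sg_K[OF rr(1) assms(1) ri])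
        have sJ: "?s \<in> Kmax n j" by (rule sg_K[OF rr(1) assms(2) rj])
        have a'K: "a \<circ> ?s \<in> Kmax n j" by (rule comp_K[OF assms(2) aK sJ])
        have "Msq n (a \<circ> ?s) < Msq n a" by (rule decrease[OF ac(1) dk r_def])
        then have "nat (Msq n (a \<circ> ?s)) < m" using m Msq_nonneg[of "a \<circ> ?s"] by simp
        then obtain b' where b': "b' \<in> Kmax n i" "a \<circ> ?s \<circ> b' \<in> Kmax n j" "incr n i (a \<circ> ?s \<circ> b')"
          using less a'K by blast
        show ?thesis
          using b' comp_K[OF assms(1) sI b'(1)] by (intro bexI[of _ "?s \<circ> b'"]) (auto simp: o_assoc)
      qed
    qed
  qed
  then show ?thesis using assms(4) by blast
qed

lemma incr_mono: assumes "incr n i c" "int i < x" "x + int t \<le> int i + N" shows "c x \<le> c (x + int t)"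
  using assms(3)
proof (induction t)
  case 0 then show ?case by simp
next
  case (Suc t)
  have "c (x + int t) < c (x + int t + 1)" using assms(1,2) Suc.prems unfolding incr_def by auto
  then show ?case using Suc by (simp add: algebra_simps)
qed

lemma lemU: assumes "i < n" "b \<in> Kmax n i" "incr n i c" "incr n i (c \<circ> b)"
  shows "b = id"
proof -
  have bc: "b \<in> carrier (affS n)" "Pc i b" using assms(2) Kmax_eq[OF assms(1)] by auto
  have bu: "bij b" "per n b" using bc carrier_affS by auto
  have bm: "int i < b x \<and> b x \<le> int i + N" if "int i < x" "x \<le> int i + N" for x
    by (rule blockmap[OF bu(2) bc(2) that])
  have mono: "c x \<le> c y" if "int i < x" "x \<le> y" "y \<le> int i + N" for x y
    using incr_mono[OF assms(3) that(1), of "nat (y - x)"] that by simp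
  have binc: "b k < b (k + 1)" if "int i < k" "k < int i + N" for k
  proof (rule ccontr)
    assume "\<not> b k < b (k + 1)"
    then have "c (b (k + 1)) \<le> c (b k)" using mono bm that by simp
    moreover have "c (b k) < c (b (k + 1))" using assms(4) that unfolding incr_def by auto
    ultimately show False by simp
  qed
  have up: "t < n \<longrightarrow> b (int i + 1 + int t) \<ge> int i + 1 + int t" for t
  proof (induction t)
    case 0 then show ?case using bm[of "int i + 1"] N2 by simp
  next
    case (Suc t)
    show ?case
    proof
      assume "Suc t < n"
      then have "b (int i + 1 + int t) < b (int i + 1 + int t + 1)" using binc[of "int i + 1 + int t"] by simp
      then show "b (int i + 1 + int (Suc t)) \<ge> int i + 1 + int (Suc t)" using Suc \<open>Suc t < n\<close> by simp
    qed
  qed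
  have down: "t < n \<longrightarrow> b (int i + N - int t) \<le> int i + N - int t" for t
  proof (induction t)
    case 0 then show ?case using bm[of "int i + N"] N2 by simp
  next
    case (Suc t)
    show ?case
    proof
      assume "Suc t < n"
      have e: "int i + N - int (Suc t) + 1 = int i + N - int t" by simp
      have h1: "b (int i + N - int (Suc t)) < b (int i + N - int t)"
        using binc[of "int i + N - int (Suc t)"] \<open>Suc t < n\<close> unfolding e by simp
      have h2: "b (int i + N - int t) \<le> int i + N - int t" using Suc.IH \<open>Suc t < n\<close> by simp
      show "b (int i + N - int (Suc t)) \<le> int i + N - int (Suc t)" using h1 h2 by simp
    qed
  qed
  show ?thesis
  proof (rule block_eq[OF bu(2) per_id])
    fix x assume x: "int i < x" "x \<le> int i + N"
    have "b x \<ge> x" using up[of "nat (x - int i - 1)"] x by simp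
    moreover have "b x \<le> x" using down[of "nat (int i + N - x)"] x by simp
    ultimately show "b x = id x" by simp
  qed
qed


lemma inv_K: assumes "i < n" "u \<in> Kmax n i" shows "hinv u \<in> Kmax n i"
proof -
  have "u \<in> carrier (affS n)" "Pc i u" using assms Kmax_eq[OF assms(1)] by auto
  moreover have "bij u" using calculation carrier_affS by auto
  ultimately show ?thesis using Kmax_eq[OF assms(1)] inv_closed2 Pc_inv by auto
qed

lemma K_bij: assumes "i < n" "u \<in> Kmax n i" shows "bij u"
  using assms Kmax_eq[OF assms(1)] carrier_affS by auto

lemma A2: assumes "\<tau> \<noteq> {}" "\<tau> \<subseteq> {0..<n}" "i < n" "i \<notin> \<tau>"
  shows "(\<Inter>j\<in>\<tau>. Kmax n j) <#>\<^bsub>affS n\<^esub> Kmax n i = (\<Inter>j\<in>\<tau>. Kmax n j <#>\<^bsub>affS n\<^esub> Kmax n i)"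
proof
  show "(\<Inter>j\<in>\<tau>. Kmax n j) <#>\<^bsub>affS n\<^esub> Kmax n i \<subseteq> (\<Inter>j\<in>\<tau>. Kmax n j <#>\<^bsub>affS n\<^esub> Kmax n i)"
    unfolding set_mult_def by blast
next
  show "(\<Inter>j\<in>\<tau>. Kmax n j <#>\<^bsub>affS n\<^esub> Kmax n i) \<subseteq> (\<Inter>j\<in>\<tau>. Kmax n j) <#>\<^bsub>affS n\<^esub> Kmax n i"
  proof
    fix g assume g: "g \<in> (\<Inter>j\<in>\<tau>. Kmax n j <#>\<^bsub>affS n\<^esub> Kmax n i)"
    have ex: "\<exists>\<beta>\<in>Kmax n i. g \<circ> \<beta> \<in> Kmax n j \<and> incr n i (g \<circ> \<beta>)" if j: "j \<in> \<tau>" for j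
    proof -
      have jn: "j < n" "i \<noteq> j" using j assms by auto
      obtain a b where ab: "a \<in> Kmax n j" "b \<in> Kmax n i" "g = a \<circ> b"
        using g j unfolding set_mult_def by auto
      obtain b' where b': "b' \<in> Kmax n i" "a \<circ> b' \<in> Kmax n j" "incr n i (a \<circ> b')"
        using lemE[OF assms(3) jn(1) jn(2) ab(1)] by blast
      have bb: "bij b" by (rule K_bij[OF assms(3) ab(2)])
      have "g \<circ> (hinv b \<circ> b') = a \<circ> b'" using ab(3) bb
        by (simp add: fun_eq_iff bij_is_surj surj_f_inv_f)
      moreover have "hinv b \<circ> b' \<in> Kmax n i" by (rule comp_K[OF assms(3) inv_K[OF assms(3) ab(2)] b'(1)])
      ultimately show ?thesis using b' by (intro bexI[of _ "hinv b \<circ> b'"]) auto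
    qed
    obtain j0 where j0: "j0 \<in> \<tau>" using assms(1) by auto
    obtain \<beta>0 where b0: "\<beta>0 \<in> Kmax n i" "g \<circ> \<beta>0 \<in> Kmax n j0" "incr n i (g \<circ> \<beta>0)" using ex[OF j0] by blast
    have b0b: "bij \<beta>0" by (rule K_bij[OF assms(3) b0(1)])
    have cK: "g \<circ> \<beta>0 \<in> Kmax n j" if j: "j \<in> \<tau>" for j
    proof -
      obtain \<beta> where b: "\<beta> \<in> Kmax n i" "g \<circ> \<beta> \<in> Kmax n j" "incr n i (g \<circ> \<beta>)" using ex[OF j] by blast
      have e: "g \<circ> \<beta>0 \<circ> (hinv \<beta>0 \<circ> \<beta>) = g \<circ> \<beta>" using b0b
        by (simp add: fun_eq_iff bij_is_surj surj_f_inv_f)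
      have "hinv \<beta>0 \<circ> \<beta> = id"
        by (rule lemU[OF assms(3) comp_K[OF assms(3) inv_K[OF assms(3) b0(1)] b(1)] b0(3)]) (use e b in simp)
      then have "g \<circ> \<beta>0 = g \<circ> \<beta>" using e by simp
      then show ?thesis using b by simp
    qed
    have "g = (g \<circ> \<beta>0) \<circ> hinv \<beta>0" using b0b by (simp add: fun_eq_iff bij_is_surj surj_f_inv_f)
    moreover have "hinv \<beta>0 \<in> Kmax n i" by (rule inv_K[OF assms(3) b0(1)])
    ultimately show "g \<in> (\<Inter>j\<in>\<tau>. Kmax n j) <#>\<^bsub>affS n\<^esub> Kmax n i"
      unfolding set_mult_def using cK by auto
  qed
qed


lemma Ktau_eq: assumes "\<tau> \<subseteq> {0..<n}" shows "Ktau (affS n) (Kmax n) \<tau> = Stab n ({0..<n} - \<tau>)"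
proof (cases "\<tau> = {}")
  case True then show ?thesis unfolding Ktau_def Stab_def by auto
next
  case False
  have "(\<Inter>j\<in>\<tau>. Kmax n j) = (\<Inter>j\<in>\<tau>. {u \<in> carrier (affS n). Pc j u})"
  proof (rule INF_cong)
    fix j assume "j \<in> \<tau>"
    then show "Kmax n j = {u \<in> carrier (affS n). Pc j u}" using Kmax_eq assms by auto
  qed simp
  also have "\<dots> = Stab n ({0..<n} - \<tau>)" unfolding Stab_def using False assms by auto
  finally show ?thesis unfolding Ktau_def using False by simp
qed

lemma gen_gen: assumes "S \<subseteq> carrier (affS n)" "T \<subseteq> carrier (affS n)"
  shows "generate (affS n) (generate (affS n) S \<union> generate (affS n) T) = generate (affS n) (S \<union> T)"
proof
  have "generate (affS n) S \<union> generate (affS n) T \<subseteq> generate (affS n) (S \<union> T)"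
    using group.mono_generate[OF grp, of S "S \<union> T"] group.mono_generate[OF grp, of T "S \<union> T"] by auto
  then show "generate (affS n) (generate (affS n) S \<union> generate (affS n) T) \<subseteq> generate (affS n) (S \<union> T)"
    using group.generate_subgroup_incl[OF grp _ group.generate_is_subgroup[OF grp]] assms by blast
next
  show "generate (affS n) (S \<union> T) \<subseteq> generate (affS n) (generate (affS n) S \<union> generate (affS n) T)"
    by (rule group.mono_generate[OF grp]) (auto intro: generate.incl)
qed

lemma gens_carrier: "J \<subseteq> {0..<n} \<Longrightarrow> gen_s n ` J \<subseteq> carrier (affS n)"
  using gen_carrier by auto

lemma part3: assumes "J \<subseteq> {0..<n}" "L \<subseteq> {0..<n}"
  shows "generate (affS n) (gen_s n ` J) \<inter> generate (affS n) (gen_s n ` L) = generate (affS n) (gen_s n ` (J \<inter> L))"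
proof -
  have "J \<inter> L \<subseteq> {0..<n}" using assms by auto
  then show ?thesis unfolding Stab_gen[OF assms(1)] Stab_gen[OF assms(2)] Stab_gen[OF \<open>J \<inter> L \<subseteq> {0..<n}\<close>]
    by (auto simp: Stab_def)
qed

lemma carrier_mult: assumes "i < n" shows "carrier (affS n) <#>\<^bsub>affS n\<^esub> Kmax n i = carrier (affS n)"
proof
  show "carrier (affS n) <#>\<^bsub>affS n\<^esub> Kmax n i \<subseteq> carrier (affS n)"
    unfolding set_mult_def using Kmax_eq[OF assms] comp_closed by auto
  show "carrier (affS n) \<subseteq> carrier (affS n) <#>\<^bsub>affS n\<^esub> Kmax n i"
  proof
    fix x assume x: "x \<in> carrier (affS n)"
    have "x \<otimes>\<^bsub>affS n\<^esub> id \<in> carrier (affS n) <#>\<^bsub>affS n\<^esub> Kmax n i"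
      unfolding set_mult_def using x id_K[OF assms] by blast
    then show "x \<in> carrier (affS n) <#>\<^bsub>affS n\<^esub> Kmax n i" by simp
  qed
qed

lemma part1: assumes "J \<subseteq> {0..<n}" "card J > 1"
  shows "subgroup_geometry_system (affS n) J (Kmax n)"
  unfolding subgroup_geometry_system_def
proof (intro conjI allI impI ballI)
  show "group (affS n)" by (rule grp)
  show fin: "finite J" using assms(1) finite_subset by blast
  fix i assume "i \<in> J"
  then show "subgroup (Kmax n i) (affS n)" using Kmax_Stab Stab_subgroup assms(1) by auto
next
  fix \<tau> \<tau>' assume t: "\<tau> \<subseteq> J" "\<tau>' \<subseteq> J"
  let ?I = "{0..<n}"
  have t': "\<tau> \<subseteq> ?I" "\<tau>' \<subseteq> ?I" "\<tau> \<inter> \<tau>' \<subseteq> ?I" using t assms by auto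
  have "generate (affS n) (Ktau (affS n) (Kmax n) \<tau> \<union> Ktau (affS n) (Kmax n) \<tau>')
      = generate (affS n) (generate (affS n) (gen_s n ` (?I - \<tau>)) \<union> generate (affS n) (gen_s n ` (?I - \<tau>')))"
    using Ktau_eq t' Stab_gen by simp
  also have "\<dots> = generate (affS n) (gen_s n ` (?I - \<tau>) \<union> gen_s n ` (?I - \<tau>'))"
    by (rule gen_gen) (auto intro: gens_carrier[THEN subsetD])
  also have "gen_s n ` (?I - \<tau>) \<union> gen_s n ` (?I - \<tau>') = gen_s n ` (?I - (\<tau> \<inter> \<tau>'))" by auto
  also have "generate (affS n) \<dots> = Ktau (affS n) (Kmax n) (\<tau> \<inter> \<tau>')"
    using Ktau_eq[OF t'(3)] Stab_gen by simp
  finally show "Ktau (affS n) (Kmax n) (\<tau> \<inter> \<tau>') = generate (affS n) (Ktau (affS n) (Kmax n) \<tau> \<union> Ktau (affS n) (Kmax n) \<tau>')"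
    by simp
next
  fix \<tau> i assume t: "\<tau> \<subset> J" and i: "i \<in> J - \<tau>"
  have "\<tau> \<subseteq> {0..<n}" "i < n" "i \<notin> \<tau>" using t i assms by auto
  then show "Ktau (affS n) (Kmax n) \<tau> <#>\<^bsub>affS n\<^esub> Kmax n i =
        (if \<tau> = {} then carrier (affS n) else (\<Inter>j\<in>\<tau>. Kmax n j <#>\<^bsub>affS n\<^esub> Kmax n i))"
    using A2 carrier_mult unfolding Ktau_def by auto
next
  fix i assume i: "i \<in> J"
  have "J - {i} \<noteq> {}"
  proof
    assume "J - {i} = {}"
    then have "J \<subseteq> {i}" by auto
    then have "card J \<le> 1" using card_mono[of "{i}" J] by simp
    then show False using assms(2) by simp
  qed
  have i': "i < n" using i assms by auto
  have "gen_s n i \<in> Stab n ({0..<n} - (J - {i}))" by (rule gen_Stab) (use i' in auto)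
  moreover have "gen_s n i \<notin> Stab n ({0..<n} - J)"
  proof
    assume "gen_s n i \<in> Stab n ({0..<n} - J)"
    then have "Pc i (sg n i)" using i i' gen_s_eq[OF i'] unfolding Stab_def by auto
    then have "(sg n i (int i) \<le> int i) = (int i \<le> int i)" unfolding Pc_def by blast
    moreover have "sg n i (int i) = int i + 1" using i' unfolding sg_def by simp
    ultimately show False by simp
  qed
  ultimately show "Ktau (affS n) (Kmax n) J \<noteq> Ktau (affS n) (Kmax n) (J - {i})"
    using Ktau_eq[of J] Ktau_eq[of "J - {i}"] assms(1) by auto
qed

end

theorem mainTheorem4:
  fixes n :: nat
  assumes "n \<ge> 2"
  shows "(\<forall>J. J \<subseteq> {0..<n} \<and> card J > 1 \<longrightarrow>
            subgroup_geometry_system (affS n) J (Kmax n))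
       \<and> (\<forall>i<n. \<exists>\<phi>. \<phi> \<in> iso ((affS n)\<lparr>carrier := Kmax n i\<rparr>) (BijGroup {0..<n})
              \<and> (\<forall>j<n. j \<noteq> i \<longrightarrow>
                   \<phi> (gen_s n j) = restrict (transpose j ((j + 1) mod n)) {0..<n}))
       \<and> (\<forall>J L. J \<subseteq> {0..<n} \<longrightarrow> L \<subseteq> {0..<n} \<longrightarrow>
            generate (affS n) (gen_s n ` J) \<inter> generate (affS n) (gen_s n ` L)
              = generate (affS n) (gen_s n ` (J \<inter> L)))"
  using part1[OF assms] iso_part[OF assms] phi_gen[OF assms] part3[OF assms] by blast

end
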